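(* Let $(V,\sim)$ be a finite graph equipped with the side data $\mathrm{left}(\cdot),\mathrm{right}(\cdot)$ described in the context, and assume that $(V,\sim)$ admits a conformal model. Let $Q \subseteq V$ be a prime node of the modular decomposition tree of $(V,\sim)$, let $M_1,\ldots,M_n$ be the children of $Q$ in this tree, and let $U \subseteq Q$ be a set containing exactly one vertex from each $M_i$, $i \in \{1,\ldots,n\}$. Then the graph $(U,\sim)$, which is prime, has exactly two conformal models up to equivalence, and one of them is the reflection of the other.
   Context: Graph and side data. $(V,\sim)$ is a finite simple graph; we write $u \parallel v$ when $u \neq v$ and $u,v$ are non-adjacent, and for sets $X \sim Y$ (resp. $X \parallel Y$) means $x\sim y$ (resp. $x \parallel y$) for all $x\in X$, $y \in Y$. For every $u \in V$ we are given a partition of $\{v \in V : v \parallel u\}$ into two sets $\mathrm{left}(u)$ and $\mathrm{right}(u)$. (In the paper, $(V,\sim)$ is the overlap graph $G_{ov}$ of a circular-arc graph $G$ and these sets come from the arc model; the statement uses only the data above and the existence of a conformal model of $(V,\sim)$.) Conformal models. For $U \subseteq V$, a conformal model of $(U,\sim)$ is a circular word $\phi$ (a word considered up to cyclic rotation; two such words are equivalent if one is a rotation of the other) in which each of the letters $u^0,u^1$, $u \in U$, occurs exactly once, such that: (i) for distinct $u,v \in U$, the chords $\phi(u)$ (joining $u^0,u^1$) and $\phi(v)$ cross, i.e. the letters of $u$ and $v$ alternate in $\phi$, if and only if $u \sim v$; (ii) for $u,v \in U$ with $u \parallel v$, both letters of $v$ lie on the left side of $\phi(u)$ (i.e. among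 the letters met when reading $\phi$ cyclically forward from $u^0$ to $u^1$) if $v \in \mathrm{left}(u)$, and both lie on the right side of $\phi(u)$ (among the letters met reading forward from $u^1$ to $u^0$) if $v \in \mathrm{right}(u)$. The reflection of a circular word $\phi$ is obtained by reversing $\phi$ and exchanging $u^0$ and $u^1$ for every $u$. Modular decomposition. A module of a graph $(X,\sim)$ is a set $M \subseteq X$ such that every vertex of $X \setminus M$ is adjacent either to all or to none of the vertices of $M$; it is trivial if $|M| \le 1$ or $M = X$. A graph is prime if it has only trivial modules. A node $Q$ of the modular decomposition tree of $(V,\sim)$ is prime if its children $M_1,\ldots,M_n$ (the maximal strong modules properly contained in $Q$) are such that the quotient graph obtained from $(Q,\sim)$ by picking one vertex in each $M_i$ is prime. *)

theory Defs
  imports Main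
begin

(* Letters of a circular word: (u, False) stands for u^0, (u, True) for u^1.
   A circular word is represented by a list; two lists represent the same
   circular word iff one is a rotation of the other. *)

type_synonym 'v letter = "'v \<times> bool"

definition nonadj :: "('v \<Rightarrow> 'v \<Rightarrow> bool) \<Rightarrow> 'v \<Rightarrow> 'v \<Rightarrow> bool" where
  "nonadj adj u v \<longleftrightarrow> u \<noteq> v \<and> \<not> adj u v"

definition simple_graph :: "'v set \<Rightarrow> ('v \<Rightarrow> 'v \<Rightarrow> bool) \<Rightarrow> bool" where
  "simple_graph V adj \<longleftrightarrow> finite V \<and> (\<forall>u\<in>V. \<not> adj u u)
      \<and> (\<forall>u\<in>V. \<forall>v\<in>V. adj u v \<longleftrightarrow> adj v u)"

definition side_data :: "'v set \<Rightarrow> ('v \<Rightarrow> 'v \<Rightarrow> bool) \<Rightarrow> ('v \<Rightarrow> 'v set) \<Rightarrow> ('v \<Rightarrow> 'v set) \<Rightarrow> bool" where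
  "side_data V adj lft rgt \<longleftrightarrow> (\<forall>u\<in>V. lft u \<inter> rgt u = {}
      \<and> lft u \<union> rgt u = {v\<in>V. nonadj adj u v})"

definition left_side :: "'v letter list \<Rightarrow> 'v \<Rightarrow> 'v letter set" where
  "left_side w u = {x. \<exists>n a b. rotate n w = [(u,False)] @ a @ [(u,True)] @ b \<and> x \<in> set a}"

definition right_side :: "'v letter list \<Rightarrow> 'v \<Rightarrow> 'v letter set" where
  "right_side w u = {x. \<exists>n a b. rotate n w = [(u,False)] @ a @ [(u,True)] @ b \<and> x \<in> set b}"

definition crosses :: "'v letter list \<Rightarrow> 'v \<Rightarrow> 'v \<Rightarrow> bool" where
  "crosses w u v \<longleftrightarrow> ((v,False) \<in> left_side w u \<longleftrightarrow> (v,True) \<notin> left_side w u)"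

definition conformal_model ::
  "('v \<Rightarrow> 'v \<Rightarrow> bool) \<Rightarrow> ('v \<Rightarrow> 'v set) \<Rightarrow> ('v \<Rightarrow> 'v set) \<Rightarrow> 'v set \<Rightarrow> 'v letter list \<Rightarrow> bool" where
  "conformal_model adj lft rgt U w \<longleftrightarrow>
     distinct w \<and> set w = U \<times> UNIV
     \<and> (\<forall>u\<in>U. \<forall>v\<in>U. u \<noteq> v \<longrightarrow> (crosses w u v \<longleftrightarrow> adj u v))
     \<and> (\<forall>u\<in>U. \<forall>v\<in>U. nonadj adj u v \<longrightarrow>
          (v \<in> lft u \<longrightarrow> {(v,False),(v,True)} \<subseteq> left_side w u)
        \<and> (v \<in> rgt u \<longrightarrow> {(v,False),(v,True)} \<subseteq> right_side w u))"

definition cw_equiv :: "'a list \<Rightarrow> 'a list \<Rightarrow> bool" where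
  "cw_equiv w w' \<longleftrightarrow> (\<exists>n. rotate n w = w')"

definition reflect :: "'v letter list \<Rightarrow> 'v letter list" where
  "reflect w = map (\<lambda>(u,b). (u, \<not> b)) (rev w)"

definition is_module :: "('v \<Rightarrow> 'v \<Rightarrow> bool) \<Rightarrow> 'v set \<Rightarrow> 'v set \<Rightarrow> bool" where
  "is_module adj X M \<longleftrightarrow> M \<subseteq> X \<and>
     (\<forall>x\<in>X - M. (\<forall>m\<in>M. adj x m) \<or> (\<forall>m\<in>M. \<not> adj x m))"

definition prime_graph :: "('v \<Rightarrow> 'v \<Rightarrow> bool) \<Rightarrow> 'v set \<Rightarrow> bool" where
  "prime_graph adj X \<longleftrightarrow> (\<forall>M. is_module adj X M \<longrightarrow> card M \<le> 1 \<or> M = X)"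

(* strong modules = nodes of the modular decomposition tree *)
definition strong_module :: "('v \<Rightarrow> 'v \<Rightarrow> bool) \<Rightarrow> 'v set \<Rightarrow> 'v set \<Rightarrow> bool" where
  "strong_module adj V M \<longleftrightarrow> is_module adj V M \<and> M \<noteq> {} \<and>
     (\<forall>M'. is_module adj V M' \<longrightarrow> M \<inter> M' = {} \<or> M \<subseteq> M' \<or> M' \<subseteq> M)"

definition md_child :: "('v \<Rightarrow> 'v \<Rightarrow> bool) \<Rightarrow> 'v set \<Rightarrow> 'v set \<Rightarrow> 'v set \<Rightarrow> bool" where
  "md_child adj V Q M \<longleftrightarrow> strong_module adj V M \<and> M \<subset> Q \<and>
     \<not> (\<exists>M'. strong_module adj V M' \<and> M \<subset> M' \<and> M' \<subset> Q)"

definition representatives :: "('v \<Rightarrow> 'v \<Rightarrow> bool) \<Rightarrow> 'v set \<Rightarrow> 'v set \<Rightarrow> 'v set \<Rightarrow> bool" where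
  "representatives adj V Q U \<longleftrightarrow> U \<subseteq> Q \<and>
     (\<forall>M. md_child adj V Q M \<longrightarrow> card (U \<inter> M) = 1)"

(* prime node: an internal node with at least three children (i.e. not a leaf
   and not a two-child series/parallel node) whose quotient graph is prime *)
definition prime_node :: "('v \<Rightarrow> 'v \<Rightarrow> bool) \<Rightarrow> 'v set \<Rightarrow> 'v set \<Rightarrow> bool" where
  "prime_node adj V Q \<longleftrightarrow> strong_module adj V Q \<and>
     card {M. md_child adj V Q M} \<ge> 3 \<and>
     (\<forall>U. representatives adj V Q U \<longrightarrow> prime_graph adj U)"

end

theory Submission
  imports Defs
begin

primrec idx :: "'a list \<Rightarrow> 'a \<Rightarrow> nat" where
  "idx [] x = 0"
| "idx (y#ys) x = (if y = x then 0 else Suc (idx ys x))"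

lemma idx_less: "x \<in> set w \<Longrightarrow> idx w x < length w"
  by (induction w) auto

lemma nth_idx: "x \<in> set w \<Longrightarrow> w ! idx w x = x"
  by (induction w) auto

lemma idx_nth: "distinct w \<Longrightarrow> i < length w \<Longrightarrow> idx w (w ! i) = i"
proof (induction w arbitrary: i)
  case Nil then show ?case by simp
next
  case (Cons y ys)
  then show ?case by (cases i) (auto simp: nth_mem)
qed

lemma idx_inj: "x \<in> set w \<Longrightarrow> y \<in> set w \<Longrightarrow> idx w x = idx w y \<Longrightarrow> x = y"
  by (metis nth_idx)

lemma idx_append: "idx (xs @ ys) x = (if x \<in> set xs then idx xs x else length xs + idx ys x)"
  by (induction xs) auto

definition cyc3 :: "'a::linorder \<Rightarrow> 'a \<Rightarrow> 'a \<Rightarrow> bool" where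
  "cyc3 i j k \<longleftrightarrow> (i<j \<and> j<k) \<or> (j<k \<and> k<i) \<or> (k<i \<and> i<j)"

definition cyc :: "'a list \<Rightarrow> 'a \<Rightarrow> 'a \<Rightarrow> 'a \<Rightarrow> bool" where
  "cyc w a b c \<longleftrightarrow> cyc3 (idx w a) (idx w b) (idx w c)"

lemma cyc3_rot: "cyc3 i j k = cyc3 j k i"
  unfolding cyc3_def by blast

lemma lt_F: "(a::'a::linorder) < b \<Longrightarrow> (b < a) = False" by auto

lemma cyc3_anti: "i \<noteq> j \<Longrightarrow> j \<noteq> k \<Longrightarrow> i \<noteq> (k::'a::linorder) \<Longrightarrow> cyc3 i k j = (\<not> cyc3 i j k)"
  by (rule linorder_neqE[of i j]; (order; fail)?; rule linorder_neqE[of j k]; (order; fail)?;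
      rule linorder_neqE[of i k]; (order; fail)?; simp add: cyc3_def lt_F)

lemma cyc3_refl: "\<not> cyc3 i i k" "\<not> cyc3 i k k" "\<not> cyc3 k i k"
  unfolding cyc3_def by auto

lemma cyc_rot: "cyc w a b c = cyc w b c a"
  unfolding cyc_def by (rule cyc3_rot)

lemma idx_neq: "a \<in> set w \<Longrightarrow> b \<in> set w \<Longrightarrow> a \<noteq> b \<Longrightarrow> idx w a \<noteq> idx w b"
  by (metis nth_idx)

lemma cyc_anti: "a \<in> set w \<Longrightarrow> b \<in> set w \<Longrightarrow> c \<in> set w \<Longrightarrow> a \<noteq> b \<Longrightarrow> b \<noteq> c \<Longrightarrow> a \<noteq> c
  \<Longrightarrow> cyc w a c b = (\<not> cyc w a b c)"
  unfolding cyc_def by (intro cyc3_anti idx_neq)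

lemma cyc_same: "\<not> cyc w a a c" "\<not> cyc w a c c" "\<not> cyc w c a c"
  unfolding cyc_def by (auto simp: cyc3_refl)

lemma cyc3_cong: "(i<j \<longleftrightarrow> i'<j') \<Longrightarrow> (j<k \<longleftrightarrow> j'<k') \<Longrightarrow> (k<i \<longleftrightarrow> k'<i') \<Longrightarrow> cyc3 i j k = cyc3 i' j' k'"
  unfolding cyc3_def by simp

lemma cyc3_shift:
  assumes "i < Suc n" "j < Suc n" "k < Suc (n::nat)"
  shows "cyc3 (if i = 0 then n else i - 1) (if j = 0 then n else j - 1) (if k = 0 then n else k - 1) = cyc3 i j k"
proof (cases "i = 0 \<or> j = 0 \<or> k = 0")
  case False then show ?thesis by (intro cyc3_cong) auto
next
  case True
  then show ?thesis using assms unfolding cyc3_def by (elim disjE) auto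
qed

lemma idx_rotate1:
  assumes "distinct (h#t)" "y \<in> set (h#t)"
  shows "idx (rotate1 (h#t)) y = (if idx (h#t) y = 0 then length t else idx (h#t) y - 1)"
  using assms by (auto simp: idx_append)

lemma cyc_rotate1:
  assumes "distinct w" "a \<in> set w" "b \<in> set w" "c \<in> set w"
  shows "cyc (rotate1 w) a b c = cyc w a b c"
proof (cases w)
  case Nil then show ?thesis using assms by simp
next
  case (Cons h t)
  have l: "\<And>y. y \<in> set w \<Longrightarrow> idx w y < Suc (length t)" using idx_less Cons by fastforce
  show ?thesis unfolding cyc_def using assms Cons
    by (simp only: idx_rotate1 length_Cons) (rule cyc3_shift; use l Cons in auto)
qed

lemma cyc_rotate:
  assumes "distinct w" "a \<in> set w" "b \<in> set w" "c \<in> set w"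
  shows "cyc (rotate n w) a b c = cyc w a b c"
proof (induction n)
  case 0 then show ?case by simp
next
  case (Suc n)
  have "cyc (rotate (Suc n) w) a b c = cyc (rotate1 (rotate n w)) a b c" by simp
  also have "\<dots> = cyc (rotate n w) a b c"
    by (rule cyc_rotate1) (use assms in auto)
  finally show ?case using Suc by simp
qed

lemma between_char:
  assumes "distinct w" "p \<in> set w" "q \<in> set w" "p \<noteq> q"
  shows "(\<exists>n a b. rotate n w = [p] @ a @ [q] @ b \<and> x \<in> set a) \<longleftrightarrow> (x \<in> set w \<and> cyc w p x q)"
proof
  assume "\<exists>n a b. rotate n w = [p] @ a @ [q] @ b \<and> x \<in> set a"
  then obtain n a b where r: "rotate n w = [p] @ a @ [q] @ b" and x: "x \<in> set a" by blast
  have dr: "distinct (rotate n w)" using assms(1) by simp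
  then have pa: "p \<notin> set a" "q \<notin> set a" using r by auto
  have i1: "idx (rotate n w) p = 0" using r by simp
  have i2: "idx (rotate n w) x = Suc (idx a x)" using r x pa by (auto simp: idx_append)
  have i3: "idx (rotate n w) q = Suc (length a)" using r pa assms(4) by (auto simp: idx_append)
  have "idx a x < length a" using x by (rule idx_less)
  then have "cyc (rotate n w) p x q" unfolding cyc_def i1 i2 i3 cyc3_def by simp
  moreover have xw: "x \<in> set w"
    using x r by (metis Un_iff append_Cons set_append set_rotate list.set_intros(2) append_Nil)
  ultimately show "x \<in> set w \<and> cyc w p x q" using cyc_rotate assms by metis
next
  assume A: "x \<in> set w \<and> cyc w p x q"
  define r where "r = rotate (idx w p) w"
  have lr: "length r = length w" "set r = set w" "distinct r" using assms(1) by (auto simp: r_def)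
  have ne: "w \<noteq> []" using assms(2) by auto
  have r0: "r ! 0 = p"
    using ne assms(2) by (simp add: r_def nth_rotate idx_less nth_idx)
  obtain t where rt: "r = p # t" using r0 lr ne by (cases r) auto
  have xp: "x \<noteq> p" using A cyc_same by metis
  have cr: "cyc r p x q" using A cyc_rotate assms unfolding r_def by metis
  have xt: "x \<in> set t" and qt: "q \<in> set t" using rt lr A assms xp by auto
  have "idx r x = Suc (idx t x)" "idx r q = Suc (idx t q)" "idx r p = 0"
    using rt xp assms(4) by auto
  then have "idx t x < idx t q" using cr unfolding cyc_def cyc3_def by auto
  moreover have "idx t q < length t" using qt by (rule idx_less)
  ultimately have "t = take (idx t q) t @ [q] @ drop (Suc (idx t q)) t"
    and "x \<in> set (take (idx t q) t)"
    using id_take_nth_drop[of "idx t q" t] nth_idx[OF qt] nth_idx[OF xt]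
    by (auto simp: in_set_conv_nth intro!: exI[of _ "idx t x"])
  then show "\<exists>n a b. rotate n w = [p] @ a @ [q] @ b \<and> x \<in> set a"
    using rt unfolding r_def by (metis append_Cons append_Nil)
qed

lemma rot_swap:
  "(\<exists>n a b. rotate n w = [p] @ a @ [q] @ b \<and> x \<in> set b) \<longleftrightarrow>
   (\<exists>n a b. rotate n w = [q] @ a @ [p] @ b \<and> x \<in> set a)"
proof -
  have *: "\<exists>n a b. rotate n w = [q] @ a @ [p] @ b \<and> x \<in> set a"
    if "rotate n w = [p] @ a @ [q] @ b" "x \<in> set b" for n a b p q
  proof -
    have "rotate (length (p#a) + n) w = rotate (length (p#a)) (rotate n w)" by (metis rotate_rotate)
    also have "rotate n w = (p#a) @ (q#b)" using that by simp
    also have "rotate (length (p#a)) ((p#a) @ (q#b)) = (q#b) @ (p#a)" by (rule rotate_append)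
    finally show ?thesis using that by (metis append_Cons append_Nil)
  qed
  show ?thesis
  proof
    assume "\<exists>n a b. rotate n w = [p] @ a @ [q] @ b \<and> x \<in> set b"
    then show "\<exists>n a b. rotate n w = [q] @ a @ [p] @ b \<and> x \<in> set a" using * by blast
  next
    assume "\<exists>n a b. rotate n w = [q] @ a @ [p] @ b \<and> x \<in> set a"
    then obtain n a b where h: "rotate n w = [q] @ a @ [p] @ b" "x \<in> set a" by blast
    have "rotate (length (q#a) + n) w = rotate (length (q#a)) (rotate n w)" by (metis rotate_rotate)
    also have "rotate n w = (q#a) @ (p#b)" using h(1) by simp
    also have "rotate (length (q#a)) ((q#a) @ (p#b)) = (p#b) @ (q#a)" by (rule rotate_append)
    finally show "\<exists>n a b. rotate n w = [p] @ a @ [q] @ b \<and> x \<in> set b" using h by (metis append_Cons append_Nil)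
  qed
qed

lemma left_side_char:
  assumes "distinct w" "(u,False) \<in> set w" "(u,True) \<in> set w"
  shows "x \<in> left_side w u \<longleftrightarrow> x \<in> set w \<and> cyc w (u,False) x (u,True)"
  unfolding left_side_def using between_char[OF assms] by simp

lemma right_side_char:
  assumes "distinct w" "(u,False) \<in> set w" "(u,True) \<in> set w"
  shows "x \<in> right_side w u \<longleftrightarrow> x \<in> set w \<and> cyc w (u,True) x (u,False)"
  unfolding right_side_def using rot_swap[of w "(u,False)" "(u,True)" x] between_char[of w "(u,True)" "(u,False)" x] assms
  by simp

lemma crosses_char:
  assumes "distinct w" "(u,False) \<in> set w" "(u,True) \<in> set w" "(v,False) \<in> set w" "(v,True) \<in> set w"
  shows "crosses w u v \<longleftrightarrow> (cyc w (u,False) (v,False) (u,True) \<longleftrightarrow> \<not> cyc w (u,False) (v,True) (u,True))"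
  unfolding crosses_def using left_side_char[OF assms(1-3)] assms(4,5) by simp

lemma idx_filter:
  assumes "distinct w" "a \<in> set (filter P w)" "b \<in> set (filter P w)"
  shows "idx (filter P w) a < idx (filter P w) b \<longleftrightarrow> idx w a < idx w b"
  using assms
proof (induction w)
  case Nil then show ?case by simp
next
  case (Cons y ys)
  show ?case
  proof (cases "P y")
    case True
    then show ?thesis using Cons by auto
  next
    case False
    then have "a \<noteq> y" "b \<noteq> y" using Cons.prems by auto
    then show ?thesis using Cons False by auto
  qed
qed

lemma cyc_filter:
  assumes "distinct w" "a \<in> set (filter P w)" "b \<in> set (filter P w)" "c \<in> set (filter P w)"
  shows "cyc (filter P w) a b c = cyc w a b c"
  unfolding cyc_def by (rule cyc3_cong) (use idx_filter[OF assms(1)] assms in auto)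

definition sw :: "'v letter \<Rightarrow> 'v letter" where "sw x = (fst x, \<not> snd x)"

lemma sw_sw[simp]: "sw (sw x) = x" by (simp add: sw_def)
lemma sw_simps[simp]: "sw (u,b) = (u, \<not> b)" by (simp add: sw_def)
lemma inj_sw: "inj sw" by (metis injI sw_sw)

lemma reflect_sw: "reflect w = map sw (rev w)"
  unfolding reflect_def sw_def by (simp add: case_prod_beta)

lemma idx_map_inj: "inj f \<Longrightarrow> idx (map f xs) (f y) = idx xs y"
  by (induction xs) (auto dest: injD)

lemma idx_rev:
  assumes "distinct w" "y \<in> set w"
  shows "idx (rev w) y = length w - 1 - idx w y"
proof -
  have i: "idx w y < length w" using assms(2) by (rule idx_less)
  have "rev w ! (length w - 1 - idx w y) = w ! idx w y"
    using i by (simp add: rev_nth Suc_diff_Suc)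
  then have "rev w ! (length w - 1 - idx w y) = y" using nth_idx[OF assms(2)] by simp
  then show ?thesis using idx_nth[of "rev w" "length w - 1 - idx w y"] assms i by simp
qed

lemma cyc3_revmap:
  assumes "i'<j' \<longleftrightarrow> j<i" "j'<k' \<longleftrightarrow> k<j" "k'<i' \<longleftrightarrow> i<k"
  shows "cyc3 i' j' k' = cyc3 k j i"
  using assms unfolding cyc3_def by blast

lemma cyc_reflect:
  assumes "distinct w" "sw a \<in> set w" "sw b \<in> set w" "sw c \<in> set w"
  shows "cyc (reflect w) a b c = cyc w (sw c) (sw b) (sw a)"
proof -
  have e: "idx (reflect w) x = length w - 1 - idx w (sw x)" if "sw x \<in> set w" for x
    using idx_map_inj[OF inj_sw, of "rev w" "sw x"] idx_rev[OF assms(1) that]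
    by (simp add: reflect_sw)
  show ?thesis unfolding cyc_def e[OF assms(2)] e[OF assms(3)] e[OF assms(4)]
    by (rule cyc3_revmap) (use idx_less assms in force)+
qed

lemma distinct_reflect: "distinct w \<Longrightarrow> distinct (reflect w)"
  by (simp add: reflect_sw distinct_map inj_sw inj_on_subset[OF inj_sw])

lemma set_reflect: "set (reflect w) = sw ` set w"
  by (simp add: reflect_sw)

definition S :: "'v letter list \<Rightarrow> 'v \<Rightarrow> 'v letter \<Rightarrow> bool" where
  "S w u y = cyc w (u,False) y (u,True)"

lemma R_char:
  assumes "distinct w" "(u,False) \<in> set w" "(u,True) \<in> set w" "y \<in> set w" "fst y \<noteq> u"
  shows "cyc w (u,True) y (u,False) \<longleftrightarrow> \<not> S w u y"
proof -
  have "y \<noteq> (u,True)" "y \<noteq> (u,False)" using assms(5) by auto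
  then have "cyc w (u,False) (u,True) y = (\<not> cyc w (u,False) y (u,True))"
    using cyc_anti[of "(u,False)" w y "(u,True)"] assms by auto
  then show ?thesis unfolding S_def by (metis cyc_rot)
qed

definition cmodel :: "('v \<Rightarrow> 'v \<Rightarrow> bool) \<Rightarrow> ('v \<Rightarrow> 'v set) \<Rightarrow> 'v set \<Rightarrow> 'v letter list \<Rightarrow> bool" where
  "cmodel adj lft U w \<longleftrightarrow> distinct w \<and> set w = U \<times> UNIV
     \<and> (\<forall>u\<in>U. \<forall>v\<in>U. u \<noteq> v \<longrightarrow> ((S w u (v,False) \<noteq> S w u (v,True)) \<longleftrightarrow> adj u v))
     \<and> (\<forall>u\<in>U. \<forall>v\<in>U. \<forall>b. nonadj adj u v \<longrightarrow> (S w u (v,b) \<longleftrightarrow> v \<in> lft u))"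

lemma cm_to_cmodel:
  assumes cm: "conformal_model adj lft rgt U w" and sd: "side_data V adj lft rgt" and UV: "U \<subseteq> V"
  shows "cmodel adj lft U w"
proof -
  have d: "distinct w" and s: "set w = U \<times> UNIV" using cm unfolding conformal_model_def by auto
  have mem: "\<And>u b. u \<in> U \<Longrightarrow> (u,b) \<in> set w" using s by auto
  have cr: "(S w u (v,False) \<noteq> S w u (v,True)) \<longleftrightarrow> adj u v" if "u \<in> U" "v \<in> U" "u \<noteq> v" for u v
  proof -
    have "crosses w u v \<longleftrightarrow> adj u v" using cm that unfolding conformal_model_def by blast
    then show ?thesis using crosses_char[OF d mem[OF that(1)] mem[OF that(1)] mem[OF that(2)] mem[OF that(2)]]
      unfolding S_def by blast
  qed
  have sdd: "S w u (v,b) \<longleftrightarrow> v \<in> lft u" if "u \<in> U" "v \<in> U" "nonadj adj u v" for u v b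
  proof -
    have uv: "u \<noteq> v" using that(3) unfolding nonadj_def by simp
    have lr: "v \<in> lft u \<union> rgt u" "lft u \<inter> rgt u = {}" using sd that UV unfolding side_data_def by auto
    have c1: "v \<in> lft u \<longrightarrow> {(v,False),(v,True)} \<subseteq> left_side w u"
      and c2: "v \<in> rgt u \<longrightarrow> {(v,False),(v,True)} \<subseteq> right_side w u"
      using cm that unfolding conformal_model_def by blast+
    show ?thesis
    proof (cases "v \<in> lft u")
      case True
      then have "(v,b) \<in> left_side w u" using c1 by (cases b) auto
      then show ?thesis using True left_side_char[OF d mem[OF that(1)] mem[OF that(1)]] unfolding S_def by blast
    next
      case False
      then have "v \<in> rgt u" using lr by blast
      then have "(v,b) \<in> right_side w u" using c2 by (cases b) auto
      then have "cyc w (u,True) (v,b) (u,False)" using right_side_char[OF d mem[OF that(1)] mem[OF that(1)]] by blast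
      then show ?thesis using False R_char[OF d mem[OF that(1)] mem[OF that(1)] mem[OF that(2)]] uv by auto
    qed
  qed
  show ?thesis unfolding cmodel_def using d s cr sdd by blast
qed

lemma cmodel_to_cm:
  assumes cm: "cmodel adj lft U w" and sd: "side_data V adj lft rgt" and UV: "U \<subseteq> V"
  shows "conformal_model adj lft rgt U w"
proof -
  have d: "distinct w" and s: "set w = U \<times> UNIV" using cm unfolding cmodel_def by auto
  have mem: "\<And>u b. u \<in> U \<Longrightarrow> (u,b) \<in> set w" using s by auto
  have cr: "crosses w u v \<longleftrightarrow> adj u v" if "u \<in> U" "v \<in> U" "u \<noteq> v" for u v
    using crosses_char[OF d mem[OF that(1)] mem[OF that(1)] mem[OF that(2)] mem[OF that(2)]] cm that
    unfolding S_def cmodel_def by blast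
  have sides: "(v \<in> lft u \<longrightarrow> {(v,False),(v,True)} \<subseteq> left_side w u)
        \<and> (v \<in> rgt u \<longrightarrow> {(v,False),(v,True)} \<subseteq> right_side w u)"
    if "u \<in> U" "v \<in> U" "nonadj adj u v" for u v
  proof -
    have uv: "u \<noteq> v" using that(3) unfolding nonadj_def by simp
    have lr: "lft u \<inter> rgt u = {}" using sd that UV unfolding side_data_def by auto
    have e: "S w u (v,b) \<longleftrightarrow> v \<in> lft u" for b using cm that unfolding cmodel_def by blast
    have L: "(v,b) \<in> left_side w u \<longleftrightarrow> v \<in> lft u" for b
      using left_side_char[OF d mem[OF that(1)] mem[OF that(1)]] e mem[OF that(2)] unfolding S_def by blast
    have R: "(v,b) \<in> right_side w u \<longleftrightarrow> v \<notin> lft u" for b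
      using right_side_char[OF d mem[OF that(1)] mem[OF that(1)]] e mem[OF that(2)]
        R_char[OF d mem[OF that(1)] mem[OF that(1)] mem[OF that(2)]] uv by auto
    show ?thesis using L R lr by blast
  qed
  show ?thesis unfolding conformal_model_def using d s cr sides by blast
qed

lemma cmodel_filter:
  assumes cm: "cmodel adj lft V w" and UV: "U \<subseteq> V"
  shows "cmodel adj lft U (filter (\<lambda>x. fst x \<in> U) w)"
proof -
  let ?f = "filter (\<lambda>x. fst x \<in> U) w"
  have d: "distinct w" and s: "set w = V \<times> UNIV" using cm unfolding cmodel_def by auto
  have sf: "set ?f = U \<times> UNIV" using s UV by auto
  have eq: "S ?f u y = S w u y" if "u \<in> U" "fst y \<in> U" for u y
    unfolding S_def by (rule cyc_filter) (use d sf that in \<open>auto simp: mem_Times_iff\<close>)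
  have "\<forall>u\<in>U. \<forall>v\<in>U. u \<noteq> v \<longrightarrow> ((S ?f u (v,False) \<noteq> S ?f u (v,True)) \<longleftrightarrow> adj u v)"
    using cm UV eq unfolding cmodel_def by (metis fst_conv subsetD)
  moreover have "\<forall>u\<in>U. \<forall>v\<in>U. \<forall>b. nonadj adj u v \<longrightarrow> (S ?f u (v,b) \<longleftrightarrow> v \<in> lft u)"
    using cm UV eq unfolding cmodel_def by (metis fst_conv subsetD)
  ultimately show ?thesis unfolding cmodel_def using d sf by simp
qed

lemma S_reflect:
  assumes "distinct w" "set w = U \<times> UNIV" "u \<in> U" "fst y \<in> U"
  shows "S (reflect w) u y = S w u (sw y)"
  unfolding S_def using cyc_reflect[OF assms(1), of "(u,False)" y "(u,True)"] assms
  by (cases y) auto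

lemma cmodel_reflect:
  assumes cm: "cmodel adj lft U w"
  shows "cmodel adj lft U (reflect w)"
proof -
  have d: "distinct w" and s: "set w = U \<times> UNIV" using cm unfolding cmodel_def by auto
  have d': "distinct (reflect w)" using d by (rule distinct_reflect)
  have s': "set (reflect w) = U \<times> UNIV" using s by (force simp: set_reflect image_iff sw_def)
  have e: "S (reflect w) u (v,b) = S w u (v, \<not> b)" if "u \<in> U" "v \<in> U" for u v b
    using S_reflect[OF d s that(1), of "(v,b)"] that by simp
  have "\<forall>u\<in>U. \<forall>v\<in>U. u \<noteq> v \<longrightarrow> ((S (reflect w) u (v,False) \<noteq> S (reflect w) u (v,True)) \<longleftrightarrow> adj u v)"
    using cm e unfolding cmodel_def by auto
  moreover have "\<forall>u\<in>U. \<forall>v\<in>U. \<forall>b. nonadj adj u v \<longrightarrow> (S (reflect w) u (v,b) \<longleftrightarrow> v \<in> lft u)"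
    using cm e unfolding cmodel_def by auto
  ultimately show ?thesis unfolding cmodel_def using d' s' by simp
qed

lemma S_rotate:
  assumes "distinct w" "set w = U \<times> UNIV" "u \<in> U" "fst y \<in> U"
  shows "S (rotate n w) u y = S w u y"
  unfolding S_def by (rule cyc_rotate) (use assms in \<open>auto simp: mem_Times_iff\<close>)

lemma not_equiv_reflect:
  assumes cm: "cmodel adj lft U w" and e: "u \<in> U" "v \<in> U" "u \<noteq> v" "adj u v"
  shows "\<not> cw_equiv w (reflect w)"
proof
  assume "cw_equiv w (reflect w)"
  then obtain n where n: "rotate n w = reflect w" unfolding cw_equiv_def by blast
  have d: "distinct w" and s: "set w = U \<times> UNIV" using cm unfolding cmodel_def by auto
  have "S w u (v,False) = S (rotate n w) u (v,False)" using S_rotate[OF d s] e by simp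
  also have "\<dots> = S w u (v,True)" unfolding n using S_reflect[OF d s, of u "(v,False)"] e by simp
  finally show False using cm e unfolding cmodel_def by blast
qed

lemma cross_sym3:
  fixes u0 u1 v0 v1 :: "'a::linorder"
  assumes "u0 \<noteq> u1" "u0 \<noteq> v0" "u0 \<noteq> v1" "u1 \<noteq> v0" "u1 \<noteq> v1" "v0 \<noteq> v1"
    and "cyc3 u0 v0 u1 \<noteq> cyc3 u0 v1 u1"
  shows "cyc3 v0 u0 v1 = (\<not> cyc3 u0 v0 u1) \<and> cyc3 v0 u1 v1 = cyc3 u0 v0 u1"
  using assms apply -
  by (rule linorder_neqE[of u0 u1]; (order; fail)?; rule linorder_neqE[of u0 v0]; (order; fail)?;
      rule linorder_neqE[of u0 v1]; (order; fail)?; rule linorder_neqE[of u1 v0]; (order; fail)?;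
      rule linorder_neqE[of u1 v1]; (order; fail)?; rule linorder_neqE[of v0 v1]; (order; fail)?;
      simp add: cyc3_def lt_F)

lemma K3:
  fixes x a b c :: "'a::linorder"
  assumes "x\<noteq>a" "x\<noteq>b" "x\<noteq>c" "a\<noteq>b" "a\<noteq>c" "b\<noteq>c"
  shows "cyc3 a b c = ((cyc3 x a b \<and> cyc3 x b c) \<or> (cyc3 x b c \<and> cyc3 x c a) \<or> (cyc3 x c a \<and> cyc3 x a b))"
  using assms apply -
  by (rule linorder_neqE[of x a]; (order; fail)?; rule linorder_neqE[of x b]; (order; fail)?;
      rule linorder_neqE[of x c]; (order; fail)?; rule linorder_neqE[of a b]; (order; fail)?;
      rule linorder_neqE[of a c]; (order; fail)?; rule linorder_neqE[of b c]; (order; fail)?;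
      simp add: cyc3_def lt_F)

lemma F2_3:
  fixes u0 u1 y z :: "'a::linorder"
  assumes "u0 \<noteq> u1" "u0 \<noteq> y" "u0 \<noteq> z" "u1 \<noteq> y" "u1 \<noteq> z" "y \<noteq> z"
    and "cyc3 u0 y u1" "\<not> cyc3 u0 z u1"
  shows "cyc3 u0 y z \<and> cyc3 u1 z y"
  using assms apply -
  by (rule linorder_neqE[of u0 u1]; (order; fail)?; rule linorder_neqE[of u0 y]; (order; fail)?;
      rule linorder_neqE[of u0 z]; (order; fail)?; rule linorder_neqE[of u1 y]; (order; fail)?;
      rule linorder_neqE[of u1 z]; (order; fail)?; rule linorder_neqE[of y z]; (order; fail)?;
      simp add: cyc3_def lt_F)

lemma X3:
  fixes v0 v1 w0 w1 y :: "'a::linorder"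
  assumes "v0 \<noteq> v1" "v0 \<noteq> w0" "v0 \<noteq> w1" "v0 \<noteq> y" "v1 \<noteq> w0" "v1 \<noteq> w1" "v1 \<noteq> y"
    "w0 \<noteq> w1" "w0 \<noteq> y" "w1 \<noteq> y"
    and "cyc3 v0 w0 v1 = cyc3 v0 w1 v1" "cyc3 w0 v0 w1 = cyc3 w0 v1 w1" "cyc3 v0 y v1 \<noteq> cyc3 v0 w0 v1"
  shows "cyc3 w0 y w1 = cyc3 w0 v0 w1"
  using assms apply -
  by (rule linorder_neqE[of v0 v1]; (order; fail)?; rule linorder_neqE[of v0 w0]; (order; fail)?;
      rule linorder_neqE[of v0 w1]; (order; fail)?; rule linorder_neqE[of v0 y]; (order; fail)?;
      rule linorder_neqE[of v1 w0]; (order; fail)?; rule linorder_neqE[of v1 w1]; (order; fail)?;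
      rule linorder_neqE[of v1 y]; (order; fail)?; rule linorder_neqE[of w0 w1]; (order; fail)?;
      rule linorder_neqE[of w0 y]; (order; fail)?; rule linorder_neqE[of w1 y]; (order; fail)?;
      simp add: cyc3_def lt_F)

lemma cyc_K:
  assumes "x \<in> set w" "a \<in> set w" "b \<in> set w" "c \<in> set w"
    "x\<noteq>a" "x\<noteq>b" "x\<noteq>c" "a\<noteq>b" "a\<noteq>c" "b\<noteq>c"
  shows "cyc w a b c = ((cyc w x a b \<and> cyc w x b c) \<or> (cyc w x b c \<and> \<not> cyc w x a c) \<or> (\<not> cyc w x a c \<and> cyc w x a b))"
proof -
  have "cyc w x c a = (\<not> cyc w x a c)" using cyc_anti[of x w a c] assms by blast
  moreover have "cyc w a b c = ((cyc w x a b \<and> cyc w x b c) \<or> (cyc w x b c \<and> cyc w x c a) \<or> (cyc w x c a \<and> cyc w x a b))"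
    unfolding cyc_def by (rule K3) (use assms idx_neq in metis)+
  ultimately show ?thesis by simp
qed

lemma cyc_F2:
  assumes "distinct w" "(u,False) \<in> set w" "(u,True) \<in> set w" "y \<in> set w" "z \<in> set w"
    "fst y \<noteq> u" "fst z \<noteq> u" "y \<noteq> z" "S w u y" "\<not> S w u z"
  shows "cyc w (u,False) y z \<and> cyc w (u,True) z y"
proof -
  have i1: "idx w (u,False) \<noteq> idx w (u,True)" by (rule idx_neq) (use assms in auto)
  have i2: "idx w (u,False) \<noteq> idx w y" by (rule idx_neq) (use assms in auto)
  have i3: "idx w (u,False) \<noteq> idx w z" by (rule idx_neq) (use assms in auto)
  have i4: "idx w (u,True) \<noteq> idx w y" by (rule idx_neq) (use assms in auto)
  have i5: "idx w (u,True) \<noteq> idx w z" by (rule idx_neq) (use assms in auto)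
  have i6: "idx w y \<noteq> idx w z" by (rule idx_neq) (use assms in auto)
  show ?thesis using F2_3[OF i1 i2 i3 i4 i5 i6] assms(9,10) unfolding S_def cyc_def by blast
qed

lemma idx_card:
  assumes "distinct xs" "y \<in> set xs"
  shows "card {z \<in> set xs. idx xs z < idx xs y} = idx xs y"
proof -
  have i: "idx xs y < length xs" using assms(2) by (rule idx_less)
  have "{z \<in> set xs. idx xs z < idx xs y} = (\<lambda>j. xs ! j) ` {..<idx xs y}"
  proof
    show "{z \<in> set xs. idx xs z < idx xs y} \<subseteq> (\<lambda>j. xs ! j) ` {..<idx xs y}"
      using nth_idx by (force simp: image_iff)
    show "(\<lambda>j. xs ! j) ` {..<idx xs y} \<subseteq> {z \<in> set xs. idx xs z < idx xs y}"
      using i idx_nth[OF assms(1)] by auto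
  qed
  moreover have "inj_on (\<lambda>j. xs ! j) {..<idx xs y}"
    using i assms(1) by (auto simp: inj_on_def nth_eq_iff_index_eq)
  ultimately show ?thesis by (simp add: card_image)
qed

lemma list_eq_by_idx:
  assumes "distinct xs" "distinct ys" "set xs = set ys"
    "\<And>b c. b \<in> set xs \<Longrightarrow> c \<in> set xs \<Longrightarrow> (idx xs b < idx xs c \<longleftrightarrow> idx ys b < idx ys c)"
  shows "xs = ys"
proof -
  have ii: "idx xs y = idx ys y" if "y \<in> set xs" for y
  proof -
    have "{z \<in> set xs. idx xs z < idx xs y} = {z \<in> set ys. idx ys z < idx ys y}"
      using assms(3,4) that by auto
    then show ?thesis using idx_card[OF assms(1) that] idx_card[OF assms(2)] that assms(3) by metis
  qed
  have l: "length xs = length ys" using assms(1-3) by (metis distinct_card)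
  show ?thesis
  proof (rule nth_equalityI[OF l])
    fix i assume "i < length xs"
    then have y: "xs ! i \<in> set xs" "idx xs (xs ! i) = i" using idx_nth[OF assms(1)] by auto
    then have "idx ys (xs ! i) = i" using ii by metis
    then show "xs ! i = ys ! i" using nth_idx[of "xs ! i" ys] y assms(3) by metis
  qed
qed

lemma rotation_by_cyc:
  assumes "distinct p" "distinct q" "set p = set q"
    "\<And>a b c. a \<in> set p \<Longrightarrow> b \<in> set p \<Longrightarrow> c \<in> set p \<Longrightarrow> cyc p a b c = cyc q a b c"
  shows "\<exists>n. rotate n q = p"
proof (cases "p = []")
  case True then show ?thesis using assms(3) by simp
next
  case False
  define a where "a = p ! 0"
  have ap: "a \<in> set p" using False unfolding a_def by simp
  have ia: "idx p a = 0" unfolding a_def using idx_nth[OF assms(1), of 0] False by simp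
  define r where "r = rotate (idx q a) q"
  have lr: "set r = set p" "distinct r" using assms by (auto simp: r_def)
  have aq: "a \<in> set q" using ap assms(3) by simp
  have qne: "0 < length q" using aq by (cases q) auto
  have r0: "r ! 0 = a" using aq qne by (simp add: r_def nth_rotate idx_less nth_idx)
  have ra: "idx r a = 0" using r0 idx_nth[OF lr(2), of 0] lr ap by (cases r) auto
  have cr: "cyc r x y z = cyc p x y z" if "x \<in> set p" "y \<in> set p" "z \<in> set p" for x y z
    using cyc_rotate[OF assms(2)] assms(3,4) that unfolding r_def by simp
  have pos: "0 < idx w y" if "distinct w" "idx w a = 0" "y \<in> set w" "a \<in> set w" "y \<noteq> a" for w y
    using that idx_neq by fastforce
  have "p = r"
  proof (rule list_eq_by_idx[OF assms(1) lr(2) lr(1)[symmetric]])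
    fix b c assume bc: "b \<in> set p" "c \<in> set p"
    show "idx p b < idx p c \<longleftrightarrow> idx r b < idx r c"
    proof (cases "b = a \<or> c = a")
      case True
      have pp: "0 < idx p c" "0 < idx r c" if "c \<noteq> a"
        using pos[OF assms(1) ia] pos[OF lr(2) ra] bc lr ap that by auto
      show ?thesis
      proof (cases "c = a")
        case True then show ?thesis using ia ra by simp
      next
        case False then show ?thesis using \<open>b = a \<or> c = a\<close> ia ra pp by simp
      qed
    next
      case False
      have "cyc p a b c = (idx p b < idx p c)" "cyc r a b c = (idx r b < idx r c)"
        using ia ra pos[OF assms(1) ia] pos[OF lr(2) ra] bc lr ap False
        unfolding cyc_def cyc3_def by auto
      then show ?thesis using cr[OF ap bc] by simp
    qed
  qed
  then show ?thesis unfolding r_def by metis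
qed

context
  fixes adj :: "'v \<Rightarrow> 'v \<Rightarrow> bool" and lft :: "'v \<Rightarrow> 'v set" and U :: "'v set"
    and \<phi> \<psi> :: "'v letter list"
  assumes c\<phi>: "cmodel adj lft U \<phi>" and c\<psi>: "cmodel adj lft U \<psi>"
    and MX: "\<And>u y. u \<in> U \<Longrightarrow> fst y \<in> U \<Longrightarrow> fst y \<noteq> u \<Longrightarrow> S \<phi> u y = S \<psi> u y"
begin

abbreviation "DD a b c \<equiv> (cyc \<phi> a b c = cyc \<psi> a b c)"

lemma dist: "distinct \<phi>" "distinct \<psi>" "set \<phi> = U \<times> UNIV" "set \<psi> = U \<times> UNIV"
  using c\<phi> c\<psi> unfolding cmodel_def by auto

lemma mem: "fst y \<in> U \<Longrightarrow> y \<in> set \<phi>" "fst y \<in> U \<Longrightarrow> y \<in> set \<psi>"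
  using dist by (auto simp: mem_Times_iff)

lemma DD_rot: "DD a b c \<Longrightarrow> DD b c a"
  using cyc_rot by metis

lemma DD_swap:
  assumes "fst a \<in> U" "fst b \<in> U" "fst c \<in> U" "a \<noteq> b" "b \<noteq> c" "a \<noteq> c" "DD a b c"
  shows "DD a c b"
  using assms cyc_anti[of a \<phi> b c] cyc_anti[of a \<psi> b c] mem by metis

lemma DD_perm:
  assumes "fst a \<in> U" "fst b \<in> U" "fst c \<in> U" "a \<noteq> b" "b \<noteq> c" "a \<noteq> c" "DD a b c"
  shows "DD a c b" "DD b a c" "DD b c a" "DD c a b" "DD c b a"
proof -
  show 1: "DD a c b" by (rule DD_swap) (use assms in auto)
  show "DD b c a" using assms(7) by (rule DD_rot)
  show "DD c a b" using assms(7) DD_rot by metis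
  show "DD c b a" using 1 DD_rot by metis
  show "DD b a c" using 1 DD_rot by metis
qed

lemma DD_F1:
  assumes "v \<in> U" "fst y \<in> U" "fst y \<noteq> v"
  shows "DD (v,False) y (v,True)"
  using MX[OF assms] unfolding S_def .

lemma DD_F1_all:
  assumes "v \<in> U" "fst y \<in> U" "fst y \<noteq> v" "{a, c} = {(v,False),(v,True)}"
  shows "DD a y c \<and> DD a c y \<and> DD y a c \<and> DD y c a \<and> DD c a y \<and> DD c y a"
proof -
  have d: "DD (v,False) y (v,True)" by (rule DD_F1[OF assms(1-3)])
  have ne: "(v,False) \<noteq> y" "y \<noteq> (v,True)" "(v,False) \<noteq> (v,True)" using assms(3) by auto
  have "DD (v,False) (v,True) y" "DD y (v,False) (v,True)" "DD y (v,True) (v,False)"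
    "DD (v,True) (v,False) y" "DD (v,True) y (v,False)"
    using DD_perm[OF _ assms(2) _ ne d] assms(1) by auto
  then show ?thesis using d assms(4) by (auto simp: doubleton_eq_iff)
qed

lemma DD_F2:
  assumes "u \<in> U" "fst y \<in> U" "fst z \<in> U" "fst y \<noteq> u" "fst z \<noteq> u" "y \<noteq> z"
    "S \<phi> u y \<noteq> S \<phi> u z"
  shows "DD (u,b) y z"
proof -
  have main: "DD (u,b) y z" if h: "fst y \<in> U" "fst z \<in> U" "fst y \<noteq> u" "fst z \<noteq> u" "y \<noteq> z"
    "S \<phi> u y" "\<not> S \<phi> u z" for y z
  proof -
    have s2: "S \<psi> u y" "\<not> S \<psi> u z" using MX[OF assms(1)] h by auto
    have p: "cyc \<phi> (u,False) y z \<and> cyc \<phi> (u,True) z y"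
      by (rule cyc_F2) (use h dist(1) mem assms(1) in auto)
    have q: "cyc \<psi> (u,False) y z \<and> cyc \<psi> (u,True) z y"
      by (rule cyc_F2) (use h s2 dist(2) mem assms(1) in auto)
    show ?thesis
    proof (cases b)
      case False then show ?thesis using p q by simp
    next
      case True
      have "DD (u,True) z y" using p q by simp
      moreover have "(u,True) \<noteq> z" "(u,True) \<noteq> y" using h by auto
      ultimately have "DD (u,True) y z" using DD_swap[of "(u,True)" z y] h assms(1) by simp
      then show ?thesis using True by simp
    qed
  qed
  show ?thesis
  proof (cases "S \<phi> u y")
    case True then show ?thesis using main assms by auto
  next
    case False
    then have "DD (u,b) z y" using main[of z y] assms by auto
    moreover have "(u,b) \<noteq> z" "(u,b) \<noteq> y" using assms by auto
    ultimately show ?thesis using DD_swap[of "(u,b)" z y] assms by simp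
  qed
qed

lemma DD_4pt:
  assumes "fst x \<in> U" "fst a \<in> U" "fst b \<in> U" "fst c \<in> U"
    "x\<noteq>a" "x\<noteq>b" "x\<noteq>c" "a\<noteq>b" "a\<noteq>c" "b\<noteq>c"
    "DD x a b" "DD x b c" "DD x a c"
  shows "DD a b c"
  using cyc_K[of x \<phi> a b c] cyc_K[of x \<psi> a b c] assms mem by metis

lemma DD_edge:
  assumes "u \<in> U" "v \<in> U" "w \<in> U" "u \<noteq> v" "v \<noteq> w" "u \<noteq> w" "adj u v"
  shows "DD (u,b1) (v,b2) (w,b3)"
proof (cases "S \<phi> u (v,b2) \<noteq> S \<phi> u (w,b3)")
  case True then show ?thesis by (intro DD_F2) (use assms in auto)
next
  case False
  have cr: "S \<phi> u (v,False) \<noteq> S \<phi> u (v,True)" using c\<phi> assms unfolding cmodel_def by blast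
  then have "S \<phi> u (v, \<not> b2) \<noteq> S \<phi> u (w,b3)" using False by (cases b2) auto
  then have d1: "DD (u,b1) (v, \<not> b2) (w,b3)" by (intro DD_F2) (use assms in auto)
  have vv: "{(v, \<not> b2), (v,b2)} = {(v,False),(v,True)}" by (cases b2) auto
  have d2: "DD (v, \<not> b2) (u,b1) (v,b2)" using DD_F1_all[OF assms(2) _ _ vv, of "(u,b1)"] assms by auto
  have d3: "DD (v, \<not> b2) (v,b2) (w,b3)" using DD_F1_all[OF assms(2) _ _ vv, of "(w,b3)"] assms by auto
  have ne: "(u,b1) \<noteq> (v, \<not> b2)" "(v, \<not> b2) \<noteq> (w,b3)" "(u,b1) \<noteq> (w,b3)" using assms by auto
  have d1': "DD (v, \<not> b2) (u,b1) (w,b3)"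
    using DD_perm(2)[OF _ _ _ ne d1] assms by simp
  show ?thesis by (rule DD_4pt[OF _ _ _ _ _ _ _ _ _ _ d2 d3 d1']) (use assms in auto)
qed

lemma DD_path:
  assumes irr: "\<And>u. u \<in> U \<Longrightarrow> \<not> adj u u"
    and path: "(\<lambda>x y. x \<in> U \<and> y \<in> U \<and> adj x y)\<^sup>*\<^sup>* s v"
  shows "\<And>w bs bv bw. s \<in> U \<Longrightarrow> v \<in> U \<Longrightarrow> w \<in> U \<Longrightarrow> s \<noteq> v \<Longrightarrow> v \<noteq> w \<Longrightarrow> s \<noteq> w
     \<Longrightarrow> DD (s,bs) (v,bv) (w,bw)"
  using path
proof (induction rule: converse_rtranclp_induct)
  case base then show ?case by simp
next
  case (step y z)
  have yz: "y \<in> U" "z \<in> U" "adj y z" using step.hyps(1) by auto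
  have zy: "z \<noteq> y" using irr yz by auto
  show ?case
  proof (cases "z = v")
    case True then show ?thesis using DD_edge step.prems yz by auto
  next
    case zv: False
    show ?thesis
    proof (cases "z = w")
      case True
      then have "DD (y,bs) (w,bw) (v,bv)" using DD_edge step.prems yz by auto
      then show ?thesis using DD_swap[of "(y,bs)" "(w,bw)" "(v,bv)"] step.prems by auto
    next
      case zw: False
      have d1: "DD (z,False) (v,bv) (w,bw)" using step.IH[of w False bv bw] step.prems yz zv zw by auto
      have e1: "DD (y,bs) (z,False) (v,bv)" using DD_edge step.prems yz zv zy by auto
      have e2: "DD (y,bs) (z,False) (w,bw)" using DD_edge step.prems yz zw zy by auto
      have d2: "DD (z,False) (y,bs) (v,bv)"
        using DD_perm(2)[of "(y,bs)" "(z,False)" "(v,bv)"] e1 step.prems yz zv zy by auto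
      have d3: "DD (z,False) (y,bs) (w,bw)"
        using DD_perm(2)[of "(y,bs)" "(z,False)" "(w,bw)"] e2 step.prems yz zw zy by auto
      show ?thesis by (rule DD_4pt[OF _ _ _ _ _ _ _ _ _ _ d2 d1 d3]) (use step.prems yz zv zw zy in auto)
    qed
  qed
qed

lemma DD_all:
  assumes irr: "\<And>u. u \<in> U \<Longrightarrow> \<not> adj u u"
    and conn: "\<And>s v. s \<in> U \<Longrightarrow> v \<in> U \<Longrightarrow> (\<lambda>x y. x \<in> U \<and> y \<in> U \<and> adj x y)\<^sup>*\<^sup>* s v"
    and abc: "a \<in> set \<phi>" "b \<in> set \<phi>" "c \<in> set \<phi>"
  shows "DD a b c"
proof -
  obtain u bu where a: "a = (u,bu)" "u \<in> U" using abc(1) dist(3) by (metis mem_Times_iff prod.collapse)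
  obtain v bv where b: "b = (v,bv)" "v \<in> U" using abc(2) dist(3) by (metis mem_Times_iff prod.collapse)
  obtain w bw where c: "c = (w,bw)" "w \<in> U" using abc(3) dist(3) by (metis mem_Times_iff prod.collapse)
  show ?thesis
  proof (cases "a = b \<or> b = c \<or> a = c")
    case True then show ?thesis using cyc_same cyc_rot by metis
  next
    case ne: False
    show ?thesis
    proof (cases "u = v \<or> v = w \<or> u = w")
      case True
      then consider "u = v" | "v = w" | "u = w" by blast
      then show ?thesis
      proof cases
        case 1
        then have "w \<noteq> u" "{a,b} = {(u,False),(u,True)}" using ne a b c by (cases bu; cases bv; auto)+
        then show ?thesis using DD_F1_all[of u c a b] a b c by auto
      next
        case 2
        then have "u \<noteq> v" "{b,c} = {(v,False),(v,True)}" using ne a b c by (cases bv; cases bw; auto)+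
        then show ?thesis using DD_F1_all[of v a b c] a b c by auto
      next
        case 3
        then have "v \<noteq> u" "{a,c} = {(u,False),(u,True)}" using ne a b c by (cases bu; cases bw; auto)+
        then show ?thesis using DD_F1_all[of u b a c] a b c by auto
      qed
    next
      case False
      then show ?thesis using DD_path[OF irr conn[of u v]] a b c by auto
    qed
  qed
qed

lemma equiv_of_matrix:
  assumes irr: "\<And>u. u \<in> U \<Longrightarrow> \<not> adj u u"
    and conn: "\<And>s v. s \<in> U \<Longrightarrow> v \<in> U \<Longrightarrow> (\<lambda>x y. x \<in> U \<and> y \<in> U \<and> adj x y)\<^sup>*\<^sup>* s v"
  shows "cw_equiv \<psi> \<phi>"
  unfolding cw_equiv_def
  by (rule rotation_by_cyc) (use dist DD_all[OF irr conn] in auto)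

end

section \<open>Gallai-type lemma\<close>

definition gclosed :: "('v \<Rightarrow> 'v \<Rightarrow> bool) \<Rightarrow> 'v set \<Rightarrow> ('v \<Rightarrow> 'v \<Rightarrow> bool) \<Rightarrow> bool" where
  "gclosed adj U X \<longleftrightarrow> (\<forall>u v. X u v \<longrightarrow> u \<in> U \<and> v \<in> U \<and> adj u v) \<and> (\<forall>u v. X u v \<longrightarrow> X v u)
     \<and> (\<forall>u v w. u \<in> U \<longrightarrow> v \<in> U \<longrightarrow> w \<in> U \<longrightarrow> adj u v \<longrightarrow> adj u w \<longrightarrow> v \<noteq> w \<longrightarrow> \<not> adj v w
          \<longrightarrow> (X u v \<longleftrightarrow> X u w))"

context
  fixes adj :: "'v \<Rightarrow> 'v \<Rightarrow> bool" and U :: "'v set"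
  assumes fin: "finite U" and pr: "prime_graph adj U"
    and irr: "\<And>u. u \<in> U \<Longrightarrow> \<not> adj u u"
    and sym: "\<And>u v. u \<in> U \<Longrightarrow> v \<in> U \<Longrightarrow> adj u v \<longleftrightarrow> adj v u"
begin

lemma G1:
  assumes g: "gclosed adj U X" and e: "X x0 y0"
  shows "\<forall>y\<in>U. X\<^sup>*\<^sup>* x0 y"
proof -
  define K where "K = {y. X\<^sup>*\<^sup>* x0 y}"
  have XU: "\<And>u v. X u v \<Longrightarrow> u \<in> U \<and> v \<in> U \<and> adj u v" using g unfolding gclosed_def by blast
  have Xs: "\<And>u v. X u v \<Longrightarrow> X v u" using g unfolding gclosed_def by blast
  have Xg: "\<And>u v w. u \<in> U \<Longrightarrow> v \<in> U \<Longrightarrow> w \<in> U \<Longrightarrow> adj u v \<Longrightarrow> adj u w \<Longrightarrow> v \<noteq> w \<Longrightarrow> \<not> adj v w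
          \<Longrightarrow> (X u v \<longleftrightarrow> X u w)" using g unfolding gclosed_def by blast
  have x0: "x0 \<in> U" using XU e by blast
  have KU: "K \<subseteq> U"
  proof
    fix y assume "y \<in> K"
    then have "X\<^sup>*\<^sup>* x0 y" unfolding K_def by simp
    then show "y \<in> U" by (induction rule: rtranclp_induct) (use x0 XU in auto)
  qed
  have stp: "adj x k1 \<longleftrightarrow> adj x k2" if x: "x \<in> U" "x \<notin> K" and k: "k1 \<in> K" "X k1 k2" for x k1 k2
  proof -
    have k2K: "k2 \<in> K" using k unfolding K_def by (simp add: rtranclp.rtrancl_into_rtrancl)
    have kU: "k1 \<in> U" "k2 \<in> U" "adj k1 k2" using XU k by auto
    have ne: "k2 \<noteq> x" "k1 \<noteq> x" using x k k2K by auto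
    show ?thesis
    proof
      assume a: "adj x k1"
      show "adj x k2"
      proof (rule ccontr)
        assume b: "\<not> adj x k2"
        have "X k1 k2 \<longleftrightarrow> X k1 x" by (rule Xg) (use kU x a b sym ne in auto)
        then have "x \<in> K" using k unfolding K_def by (simp add: rtranclp.rtrancl_into_rtrancl)
        then show False using x by simp
      qed
    next
      assume a: "adj x k2"
      show "adj x k1"
      proof (rule ccontr)
        assume b: "\<not> adj x k1"
        have "X k2 k1 \<longleftrightarrow> X k2 x" by (rule Xg) (use kU x a b sym ne in auto)
        then have "X k2 x" using Xs k by blast
        then have "x \<in> K" using k2K unfolding K_def by (simp add: rtranclp.rtrancl_into_rtrancl)
        then show False using x by simp
      qed
    qed
  qed
  have unif: "adj x m \<longleftrightarrow> adj x x0" if x: "x \<in> U" "x \<notin> K" and m: "m \<in> K" for x m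
  proof -
    have "X\<^sup>*\<^sup>* x0 m" using m unfolding K_def by simp
    then show ?thesis
    proof (induction rule: rtranclp_induct)
      case base then show ?case by simp
    next
      case (step y z)
      have "y \<in> K" using step.hyps(1) unfolding K_def by simp
      have "adj x y \<longleftrightarrow> adj x z" by (rule stp[OF x \<open>y \<in> K\<close> step.hyps(2)])
      then show ?case using step.IH by simp
    qed
  qed
  have "is_module adj U K"
    unfolding is_module_def using KU unif by blast
  then have "card K \<le> 1 \<or> K = U" using pr unfolding prime_graph_def by blast
  moreover have "x0 \<in> K" "y0 \<in> K" unfolding K_def using e by auto
  moreover have "x0 \<noteq> y0" using irr XU e by blast
  moreover have "finite K" using KU fin finite_subset by blast
  moreover have "card {x0,y0} \<le> card K" by (rule card_mono) (use calculation in auto)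
  ultimately have "K = U" by auto
  then show ?thesis unfolding K_def by auto
qed

lemma triangle:
  assumes g: "gclosed adj U X" and c: "c \<in> U" and pq: "X p q" "adj c p" "adj c q" "\<not> X c p" "\<not> X c q"
  shows False
proof -
  have XU: "\<And>u v. X u v \<Longrightarrow> u \<in> U \<and> v \<in> U \<and> adj u v" using g unfolding gclosed_def by blast
  have Xs: "\<And>u v. X u v \<Longrightarrow> X v u" using g unfolding gclosed_def by blast
  have Xg: "\<And>u v w. u \<in> U \<Longrightarrow> v \<in> U \<Longrightarrow> w \<in> U \<Longrightarrow> adj u v \<Longrightarrow> adj u w \<Longrightarrow> v \<noteq> w \<Longrightarrow> \<not> adj v w
          \<Longrightarrow> (X u v \<longleftrightarrow> X u w)" using g unfolding gclosed_def by blast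
  define Z where "Z u v \<longleftrightarrow> X u v \<and> adj c u \<and> adj c v \<and> \<not> X c u \<and> \<not> X c v" for u v
  have half: "Z u w" if h: "u \<in> U" "v \<in> U" "w \<in> U" "adj u v" "adj u w" "v \<noteq> w" "\<not> adj v w" "Z u v" for u v w
  proof -
    have z: "X u v" "adj c u" "adj c v" "\<not> X c u" "\<not> X c v" using h(8) unfolding Z_def by auto
    have xuw: "X u w" using Xg[OF h(1-7)] z by simp
    have cw: "c \<noteq> w" using xuw z Xs by blast
    have acw: "adj c w"
    proof (rule ccontr)
      assume n: "\<not> adj c w"
      have "X u c \<longleftrightarrow> X u w" by (rule Xg) (use h c z n sym cw in auto)
      then show False using xuw z Xs by blast
    qed
    have "X c v \<longleftrightarrow> X c w" by (rule Xg) (use h c z acw in auto)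
    then show ?thesis unfolding Z_def using xuw z acw by blast
  qed
  have gZ: "gclosed adj U Z"
    unfolding gclosed_def
  proof (intro conjI)
    show "\<forall>u v. Z u v \<longrightarrow> u \<in> U \<and> v \<in> U \<and> adj u v" using XU unfolding Z_def by blast
    show "\<forall>u v. Z u v \<longrightarrow> Z v u" using Xs unfolding Z_def by blast
    show "\<forall>u v w. u \<in> U \<longrightarrow> v \<in> U \<longrightarrow> w \<in> U \<longrightarrow> adj u v \<longrightarrow> adj u w \<longrightarrow> v \<noteq> w \<longrightarrow> \<not> adj v w
          \<longrightarrow> (Z u v \<longleftrightarrow> Z u w)"
    proof (intro allI impI)
      fix u v w assume h: "u \<in> U" "v \<in> U" "w \<in> U" "adj u v" "adj u w" "v \<noteq> w" "\<not> adj v w"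
      have h': "\<not> adj w v" using h sym by blast
      show "Z u v \<longleftrightarrow> Z u w" using half[OF h] half[OF h(1,3,2,5,4) h(6)[symmetric] h'] by blast
    qed
  qed
  have zpq: "Z p q" unfolding Z_def using pq by blast
  have "Z\<^sup>*\<^sup>* p c" using G1[OF gZ zpq] c by blast
  moreover have "p \<noteq> c" using pq irr c by blast
  ultimately obtain y where "Z y c" by (metis rtranclp.cases)
  then show False unfolding Z_def using irr c by blast
qed

lemma gallai:
  assumes g: "gclosed adj U X"
  shows "(\<forall>u\<in>U. \<forall>v\<in>U. adj u v \<longrightarrow> X u v) \<or> (\<forall>u v. \<not> X u v)"
proof (rule ccontr)
  assume "\<not> ?thesis"
  then obtain a0 b0 c0 d0 where xe: "X a0 b0" and ye: "c0 \<in> U" "d0 \<in> U" "adj c0 d0" "\<not> X c0 d0" by blast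
  have XU: "\<And>u v. X u v \<Longrightarrow> u \<in> U \<and> v \<in> U \<and> adj u v" using g unfolding gclosed_def by blast
  have Xs: "\<And>u v. X u v \<Longrightarrow> X v u" using g unfolding gclosed_def by blast
  have Xg: "\<And>u v w. u \<in> U \<Longrightarrow> v \<in> U \<Longrightarrow> w \<in> U \<Longrightarrow> adj u v \<Longrightarrow> adj u w \<Longrightarrow> v \<noteq> w \<Longrightarrow> \<not> adj v w
          \<Longrightarrow> (X u v \<longleftrightarrow> X u w)" using g unfolding gclosed_def by blast
  define Y where "Y u v \<longleftrightarrow> u \<in> U \<and> v \<in> U \<and> adj u v \<and> \<not> X u v" for u v
  have gY: "gclosed adj U Y"
    unfolding gclosed_def
  proof (intro conjI)
    show "\<forall>u v. Y u v \<longrightarrow> u \<in> U \<and> v \<in> U \<and> adj u v" unfolding Y_def by blast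
    show "\<forall>u v. Y u v \<longrightarrow> Y v u" using Xs sym unfolding Y_def by blast
    show "\<forall>u v w. u \<in> U \<longrightarrow> v \<in> U \<longrightarrow> w \<in> U \<longrightarrow> adj u v \<longrightarrow> adj u w \<longrightarrow> v \<noteq> w \<longrightarrow> \<not> adj v w
          \<longrightarrow> (Y u v \<longleftrightarrow> Y u w)"
    proof (intro allI impI)
      fix u v w assume h: "u \<in> U" "v \<in> U" "w \<in> U" "adj u v" "adj u w" "v \<noteq> w" "\<not> adj v w"
      show "Y u v \<longleftrightarrow> Y u w" using Xg[OF h] h unfolding Y_def by blast
    qed
  qed
  have "X\<^sup>*\<^sup>* a0 c0" using G1[OF g xe] ye by blast
  then obtain b where xb: "X c0 b"
    by (metis Xs rtranclp.cases xe)
  have bU: "b \<in> U" "adj c0 b" using XU xb by auto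
  have bd: "b \<noteq> d0" using xb ye by blast
  have abd: "adj b d0"
  proof (rule ccontr)
    assume "\<not> adj b d0"
    then have "X c0 b \<longleftrightarrow> X c0 d0" using Xg ye bU bd by blast
    then show False using xb ye by blast
  qed
  show False
  proof (cases "X b d0")
    case True
    show False
      by (rule triangle[OF gY bU(1), of c0 d0]) (use ye bU abd sym True xb Xs in \<open>auto simp: Y_def\<close>)
  next
    case False
    show False
      by (rule triangle[OF g ye(2), of c0 b]) (use ye bU abd sym False xb Xs in auto)
  qed
qed

lemma has_edge:
  assumes "3 \<le> card U"
  shows "\<exists>u\<in>U. \<exists>v\<in>U. adj u v"
proof (rule ccontr)
  assume n: "\<not> ?thesis"
  obtain T where T: "T \<subseteq> U" "card T = 2" using obtain_subset_with_card_n[of 2 U] assms by auto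
  have "is_module adj U T" unfolding is_module_def using T n by blast
  then have "card T \<le> 1 \<or> T = U" using pr unfolding prime_graph_def by blast
  then show False using T assms by auto
qed

lemma connected:
  assumes "3 \<le> card U" "s \<in> U" "v \<in> U"
  shows "(\<lambda>x y. x \<in> U \<and> y \<in> U \<and> adj x y)\<^sup>*\<^sup>* s v"
proof -
  let ?R = "\<lambda>x y. x \<in> U \<and> y \<in> U \<and> adj x y"
  obtain a b where ab: "a \<in> U" "b \<in> U" "adj a b" using has_edge assms by blast
  have g: "gclosed adj U ?R" unfolding gclosed_def using sym by blast
  have all: "\<forall>y\<in>U. ?R\<^sup>*\<^sup>* a y" using G1[OF g, of a b] ab by blast
  have symR: "?R\<^sup>*\<^sup>* y x" if "?R\<^sup>*\<^sup>* x y" for x y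
    using that
  proof (induction rule: rtranclp_induct)
    case base then show ?case by simp
  next
    case (step y z)
    then show ?case using sym by (metis (no_types, lifting) converse_rtranclp_into_rtranclp)
  qed
  show ?thesis using all assms symR by (meson rtranclp_trans)
qed

end

lemma A2_3:
  fixes u0 u1 v0 v1 w0 w1 :: "'a::linorder"
  assumes d: "u0 \<noteq> u1" "u0 \<noteq> v0" "u0 \<noteq> v1" "u0 \<noteq> w0" "u0 \<noteq> w1" "u1 \<noteq> v0" "u1 \<noteq> v1"
    "u1 \<noteq> w0" "u1 \<noteq> w1" "v0 \<noteq> v1" "v0 \<noteq> w0" "v0 \<noteq> w1" "v1 \<noteq> w0" "v1 \<noteq> w1" "w0 \<noteq> w1"
    and cuv: "cyc3 u0 v0 u1 \<noteq> cyc3 u0 v1 u1" and cuw: "cyc3 u0 w0 u1 \<noteq> cyc3 u0 w1 u1"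
    and nv: "cyc3 v0 w0 v1 = cyc3 v0 w1 v1" and nw: "cyc3 w0 v0 w1 = cyc3 w0 v1 w1"
  shows "(cyc3 u0 v0 u1 = cyc3 u0 w0 u1) \<longleftrightarrow> (cyc3 v0 w0 v1 \<noteq> cyc3 w0 v0 w1)"
proof -
  have a: "cyc3 v0 u0 v1 = (\<not> cyc3 u0 v0 u1) \<and> cyc3 v0 u1 v1 = cyc3 u0 v0 u1"
    by (rule cross_sym3) (use d cuv in auto)
  have b: "cyc3 w0 u0 w1 = (\<not> cyc3 u0 w0 u1) \<and> cyc3 w0 u1 w1 = cyc3 u0 w0 u1"
    by (rule cross_sym3) (use d cuw in auto)
  have x0: "cyc3 v0 u0 v1 \<noteq> cyc3 v0 w0 v1 \<Longrightarrow> cyc3 w0 u0 w1 = cyc3 w0 v0 w1"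
    by (rule X3) (use d nv nw in auto)
  have x1: "cyc3 v0 u1 v1 \<noteq> cyc3 v0 w0 v1 \<Longrightarrow> cyc3 w0 u1 w1 = cyc3 w0 v0 w1"
    by (rule X3) (use d nv nw in auto)
  show ?thesis using a b x0 x1 by blast
qed

context
  fixes adj :: "'v \<Rightarrow> 'v \<Rightarrow> bool" and lft :: "'v \<Rightarrow> 'v set" and U :: "'v set" and m :: "'v letter list"
  assumes cm: "cmodel adj lft U m"
begin

lemma cm_basic: "distinct m" "set m = U \<times> UNIV"
  using cm unfolding cmodel_def by auto

lemma cm_idx_neq:
  assumes "fst a \<in> U" "fst b \<in> U" "a \<noteq> b"
  shows "idx m a \<noteq> idx m b"
  by (rule idx_neq) (use assms cm_basic in \<open>auto simp: mem_Times_iff\<close>)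

lemma cm_cross: "u \<in> U \<Longrightarrow> v \<in> U \<Longrightarrow> u \<noteq> v \<Longrightarrow> (S m u (v,False) \<noteq> S m u (v,True)) \<longleftrightarrow> adj u v"
  using cm unfolding cmodel_def by blast

lemma cm_side: "u \<in> U \<Longrightarrow> v \<in> U \<Longrightarrow> nonadj adj u v \<Longrightarrow> S m u (v,b) \<longleftrightarrow> v \<in> lft u"
  using cm unfolding cmodel_def by blast

lemma cm_cross_sym:
  assumes "u \<in> U" "v \<in> U" "u \<noteq> v" "adj u v"
  shows "S m v (u,False) = (\<not> S m u (v,False))"
proof -
  have c: "S m u (v,False) \<noteq> S m u (v,True)" using cm_cross assms by blast
  have "cyc3 (idx m (v,False)) (idx m (u,False)) (idx m (v,True)) = (\<not> cyc3 (idx m (u,False)) (idx m (v,False)) (idx m (u,True)))"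
    using cross_sym3[of "idx m (u,False)" "idx m (u,True)" "idx m (v,False)" "idx m (v,True)"]
      c cm_idx_neq assms unfolding S_def cyc_def by auto
  then show ?thesis unfolding S_def cyc_def by simp
qed

lemma cm_gamma:
  assumes "u \<in> U" "v \<in> U" "w \<in> U" "u \<noteq> v" "u \<noteq> w" "v \<noteq> w" "adj u v" "adj u w" "\<not> adj v w" "\<not> adj w v"
  shows "(S m u (v,False) = S m u (w,False)) \<longleftrightarrow> (S m v (w,False) \<noteq> S m w (v,False))"
proof -
  have cuv: "S m u (v,False) \<noteq> S m u (v,True)" and cuw: "S m u (w,False) \<noteq> S m u (w,True)"
    using cm_cross assms by blast+
  have nv: "S m v (w,False) = S m v (w,True)" and nw: "S m w (v,False) = S m w (v,True)"
    using cm_cross assms by blast+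
  show ?thesis using cuv cuw nv nw unfolding S_def cyc_def
    by (intro A2_3) (use cm_idx_neq assms in auto)
qed

end

lemma main_unique:
  fixes adj :: "'v \<Rightarrow> 'v \<Rightarrow> bool" and lft :: "'v \<Rightarrow> 'v set" and U :: "'v set"
  assumes fin: "finite U" and pr: "prime_graph adj U" and c3: "3 \<le> card U"
    and irr: "\<And>u. u \<in> U \<Longrightarrow> \<not> adj u u"
    and sym: "\<And>u v. u \<in> U \<Longrightarrow> v \<in> U \<Longrightarrow> adj u v \<longleftrightarrow> adj v u"
    and c\<phi>: "cmodel adj lft U \<phi>" and c\<psi>: "cmodel adj lft U \<psi>"
  shows "cw_equiv \<psi> \<phi> \<or> cw_equiv \<psi> (reflect \<phi>)"
proof -
  have conn: "\<And>s v. s \<in> U \<Longrightarrow> v \<in> U \<Longrightarrow> (\<lambda>x y. x \<in> U \<and> y \<in> U \<and> adj x y)\<^sup>*\<^sup>* s v"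
    using connected[OF fin pr irr sym c3] by blast
  define X where "X u v \<longleftrightarrow> u \<in> U \<and> v \<in> U \<and> adj u v \<and> (S \<phi> u (v,False) \<noteq> S \<psi> u (v,False))" for u v
  have nonadj: "nonadj adj u v" if "u \<in> U" "v \<in> U" "u \<noteq> v" "\<not> adj u v" for u v
    using that unfolding nonadj_def by simp
  have g: "gclosed adj U X"
    unfolding gclosed_def
  proof (intro conjI)
    show "\<forall>u v. X u v \<longrightarrow> u \<in> U \<and> v \<in> U \<and> adj u v" unfolding X_def by blast
    show "\<forall>u v. X u v \<longrightarrow> X v u"
    proof (intro allI impI)
      fix u v assume x: "X u v"
      then have h: "u \<in> U" "v \<in> U" "adj u v" "u \<noteq> v" unfolding X_def using irr by auto
      have "S \<phi> v (u,False) = (\<not> S \<phi> u (v,False))" "S \<psi> v (u,False) = (\<not> S \<psi> u (v,False))"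
        using cm_cross_sym[OF c\<phi> h(1,2,4,3)] cm_cross_sym[OF c\<psi> h(1,2,4,3)] by auto
      then show "X v u" using x h sym unfolding X_def by auto
    qed
    show "\<forall>u v w. u \<in> U \<longrightarrow> v \<in> U \<longrightarrow> w \<in> U \<longrightarrow> adj u v \<longrightarrow> adj u w \<longrightarrow> v \<noteq> w \<longrightarrow> \<not> adj v w
          \<longrightarrow> (X u v \<longleftrightarrow> X u w)"
    proof (intro allI impI)
      fix u v w assume h: "u \<in> U" "v \<in> U" "w \<in> U" "adj u v" "adj u w" "v \<noteq> w" "\<not> adj v w"
      have ne: "u \<noteq> v" "u \<noteq> w" using h irr by auto
      have h': "\<not> adj w v" using h sym by blast
      have "S \<phi> v (w,False) = S \<psi> v (w,False)"
        using cm_side[OF c\<phi> h(2,3) nonadj[OF h(2,3,6,7)]] cm_side[OF c\<psi> h(2,3) nonadj[OF h(2,3,6,7)]] by blast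
      moreover have "S \<phi> w (v,False) = S \<psi> w (v,False)"
        using cm_side[OF c\<phi> h(3,2) nonadj[OF h(3,2) h(6)[symmetric] h']] cm_side[OF c\<psi> h(3,2) nonadj[OF h(3,2) h(6)[symmetric] h']] by blast
      ultimately have "(S \<phi> u (v,False) = S \<phi> u (w,False)) = (S \<psi> u (v,False) = S \<psi> u (w,False))"
        using cm_gamma[OF c\<phi> h(1,2,3) ne h(6,4,5,7) h'] cm_gamma[OF c\<psi> h(1,2,3) ne h(6,4,5,7) h'] by simp
      then show "X u v \<longleftrightarrow> X u w" unfolding X_def using h by blast
    qed
  qed
  have bphi: "distinct \<phi>" "set \<phi> = U \<times> UNIV" using cm_basic[OF c\<phi>] by auto
  have crossT: "S m u (v,True) = (\<not> S m u (v,False))" if "cmodel adj lft U m" "u \<in> U" "v \<in> U" "u \<noteq> v" "adj u v" for m u v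
    using cm_cross[OF that(1-4)] that(5) by blast
  consider "\<forall>u\<in>U. \<forall>v\<in>U. adj u v \<longrightarrow> X u v" | "\<forall>u v. \<not> X u v"
    using gallai[OF fin pr irr sym g] by blast
  then show ?thesis
  proof cases
    case 2
    have MX: "S \<phi> u y = S \<psi> u y" if "u \<in> U" "fst y \<in> U" "fst y \<noteq> u" for u y
    proof -
      obtain v b where y: "y = (v,b)" by fastforce
      have v: "v \<in> U" "u \<noteq> v" using that y by auto
      show ?thesis
      proof (cases "adj u v")
        case True
        have "S \<phi> u (v,False) = S \<psi> u (v,False)" using 2 True v that unfolding X_def by blast
        then show ?thesis using crossT[OF c\<phi> that(1) v(1,2) True] crossT[OF c\<psi> that(1) v(1,2) True] y
          by (cases b) auto
      next
        case False
        then show ?thesis using cm_side[OF c\<phi> that(1) v(1) nonadj[OF that(1) v(1,2) False]]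
            cm_side[OF c\<psi> that(1) v(1) nonadj[OF that(1) v(1,2) False]] y by blast
      qed
    qed
    have "cw_equiv \<psi> \<phi>" by (rule equiv_of_matrix[OF c\<phi> c\<psi> MX irr conn]) auto
    then show ?thesis by blast
  next
    case 1
    have cr: "cmodel adj lft U (reflect \<phi>)" by (rule cmodel_reflect[OF c\<phi>])
    have MX: "S (reflect \<phi>) u y = S \<psi> u y" if "u \<in> U" "fst y \<in> U" "fst y \<noteq> u" for u y
    proof -
      obtain v b where y: "y = (v,b)" by fastforce
      have v: "v \<in> U" "u \<noteq> v" using that y by auto
      have rf: "S (reflect \<phi>) u (v,c) = S \<phi> u (v, \<not> c)" for c
        using S_reflect[OF bphi that(1), of "(v,c)"] v by simp
      show ?thesis
      proof (cases "adj u v")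
        case True
        have "S \<phi> u (v,False) \<noteq> S \<psi> u (v,False)" using 1 True v that unfolding X_def by blast
        then show ?thesis using crossT[OF c\<phi> that(1) v(1,2) True] crossT[OF c\<psi> that(1) v(1,2) True] y rf
          by (cases b) auto
      next
        case False
        then show ?thesis using cm_side[OF cr that(1) v(1) nonadj[OF that(1) v(1,2) False]]
            cm_side[OF c\<psi> that(1) v(1) nonadj[OF that(1) v(1,2) False]] y by blast
      qed
    qed
    have "cw_equiv \<psi> (reflect \<phi>)" by (rule equiv_of_matrix[OF cr c\<psi> MX irr conn]) auto
    then show ?thesis by blast
  qed
qed

lemma child_disj:
  assumes "md_child adj V Q M1" "md_child adj V Q M2" "M1 \<noteq> M2"
  shows "M1 \<inter> M2 = {}"
proof -
  have s1: "strong_module adj V M1" and s2: "strong_module adj V M2" and q: "M1 \<subset> Q" "M2 \<subset> Q"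
    and n1: "\<not> (\<exists>M'. strong_module adj V M' \<and> M1 \<subset> M' \<and> M' \<subset> Q)"
    and n2: "\<not> (\<exists>M'. strong_module adj V M' \<and> M2 \<subset> M' \<and> M' \<subset> Q)"
    using assms(1,2) unfolding md_child_def by auto
  have "is_module adj V M2" using s2 unfolding strong_module_def by blast
  then have "M1 \<inter> M2 = {} \<or> M1 \<subseteq> M2 \<or> M2 \<subseteq> M1" using s1 unfolding strong_module_def by blast
  then show ?thesis using n1 n2 s1 s2 q assms(3) by blast
qed

theorem mainTheorem1:
  fixes V :: "'v set" and adj :: "'v \<Rightarrow> 'v \<Rightarrow> bool"
    and lft rgt :: "'v \<Rightarrow> 'v set" and Q U :: "'v set"
  assumes "simple_graph V adj"
    and "side_data V adj lft rgt"
    and "\<exists>\<phi>. conformal_model adj lft rgt V \<phi>"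
    and "prime_node adj V Q"
    and "representatives adj V Q U"
  shows "prime_graph adj U \<and>
    (\<exists>\<phi>. conformal_model adj lft rgt U \<phi> \<and> conformal_model adj lft rgt U (reflect \<phi>)
        \<and> \<not> cw_equiv \<phi> (reflect \<phi>)
        \<and> (\<forall>\<psi>. conformal_model adj lft rgt U \<psi> \<longrightarrow> cw_equiv \<psi> \<phi> \<or> cw_equiv \<psi> (reflect \<phi>)))"
proof -
  note sg = assms(1) and sd = assms(2) and pn = assms(4) and rep = assms(5)
  have finV: "finite V" and irrV: "\<And>u. u \<in> V \<Longrightarrow> \<not> adj u u"
    and symV: "\<And>u v. u \<in> V \<Longrightarrow> v \<in> V \<Longrightarrow> adj u v \<longleftrightarrow> adj v u"
    using sg unfolding simple_graph_def by auto
  have pU: "prime_graph adj U" using pn rep unfolding prime_node_def by blast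
  have UQ: "U \<subseteq> Q" using rep unfolding representatives_def by blast
  have QV: "Q \<subseteq> V" using pn unfolding prime_node_def strong_module_def is_module_def by blast
  have UV: "U \<subseteq> V" using UQ QV by blast
  have finU: "finite U" using finV UV finite_subset by blast
  have irr: "\<And>u. u \<in> U \<Longrightarrow> \<not> adj u u" using irrV UV by blast
  have sym: "\<And>u v. u \<in> U \<Longrightarrow> v \<in> U \<Longrightarrow> adj u v \<longleftrightarrow> adj v u" using symV UV by blast
  have c3: "3 \<le> card U"
  proof -
    have "3 \<le> card {M. md_child adj V Q M}" using pn unfolding prime_node_def by blast
    then obtain T where T: "T \<subseteq> {M. md_child adj V Q M}" "card T = 3"
      using obtain_subset_with_card_n by metis
    then obtain M1 M2 M3 where M: "T = {M1,M2,M3}" "M1 \<noteq> M2" "M2 \<noteq> M3" "M1 \<noteq> M3"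
      using card_3_iff by metis
    have ch: "md_child adj V Q M1" "md_child adj V Q M2" "md_child adj V Q M3" using T M by auto
    have one: "card (U \<inter> M) = 1" if "md_child adj V Q M" for M
      using rep that unfolding representatives_def by blast
    obtain r1 where r1: "U \<inter> M1 = {r1}" using one[OF ch(1)] card_1_singletonE by metis
    obtain r2 where r2: "U \<inter> M2 = {r2}" using one[OF ch(2)] card_1_singletonE by metis
    obtain r3 where r3: "U \<inter> M3 = {r3}" using one[OF ch(3)] card_1_singletonE by metis
    have d: "M1 \<inter> M2 = {}" "M2 \<inter> M3 = {}" "M1 \<inter> M3 = {}"
      using child_disj ch M by metis+
    have rs: "r1 \<noteq> r2" "r2 \<noteq> r3" "r1 \<noteq> r3" using r1 r2 r3 d by blast+
    have sub: "{r1,r2,r3} \<subseteq> U" using r1 r2 r3 by blast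
    have "card {r1,r2,r3} = 3" using rs by simp
    then show ?thesis using card_mono[OF finU sub] by simp
  qed
  obtain \<Phi> where \<Phi>: "conformal_model adj lft rgt V \<Phi>" using assms(3) by blast
  have c\<Phi>: "cmodel adj lft V \<Phi>" by (rule cm_to_cmodel[OF \<Phi> sd]) simp
  define \<phi> where "\<phi> = filter (\<lambda>x. fst x \<in> U) \<Phi>"
  have c\<phi>: "cmodel adj lft U \<phi>" unfolding \<phi>_def by (rule cmodel_filter[OF c\<Phi> UV])
  have cr: "cmodel adj lft U (reflect \<phi>)" by (rule cmodel_reflect[OF c\<phi>])
  obtain u v where uv: "u \<in> U" "v \<in> U" "adj u v" using has_edge[OF finU pU irr sym c3] by blast
  have "u \<noteq> v" using uv irr by blast
  have ne: "\<not> cw_equiv \<phi> (reflect \<phi>)" by (rule not_equiv_reflect[OF c\<phi> uv(1,2) \<open>u \<noteq> v\<close> uv(3)])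
  have un: "cw_equiv \<psi> \<phi> \<or> cw_equiv \<psi> (reflect \<phi>)" if "conformal_model adj lft rgt U \<psi>" for \<psi>
    using main_unique[OF finU pU c3 irr sym c\<phi> cm_to_cmodel[OF that sd UV]] .
  show ?thesis
    using pU cmodel_to_cm[OF c\<phi> sd UV] cmodel_to_cm[OF cr sd UV] ne un by blast
qed

end
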